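(* Let $G$ be a group, $c\in G$, and $k_1,\dots,k_n$ integers with $k=\gcd(k_1,\dots,k_n)$. If the set $\{(x_1,\dots,x_n)\in G^n:x_1^{k_1}\cdots x_n^{k_n}=c\}$ is $2$-large in $G^n$, then $z^k=1$ for all $z\in Z(G)$.
   Context: A subset $X$ of a group $K$ is $2$-large in $K$ if $aX\cap bX\ne\emptyset$ for all $a,b\in K$. *)

theory Defs
  imports "HOL-Algebra.Algebra"
begin

definition two_large :: "('a, 'b) monoid_scheme \<Rightarrow> 'a set \<Rightarrow> bool" where
  "two_large GG S \<longleftrightarrow> (\<forall>a\<in>carrier GG. \<forall>b\<in>carrier GG. l_coset GG a S \<inter> l_coset GG b S \<noteq> {})"

definition group_center :: "('a, 'b) monoid_scheme \<Rightarrow> 'a set" where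
  "group_center G = {z \<in> carrier G. \<forall>g\<in>carrier G. z \<otimes>\<^bsub>G\<^esub> g = g \<otimes>\<^bsub>G\<^esub> z}"

definition power_group :: "('a, 'b) monoid_scheme \<Rightarrow> nat \<Rightarrow> (nat \<Rightarrow> 'a) monoid" where
  "power_group G n = product_group {..<n} (\<lambda>_. G)"

fun word_val :: "('a, 'b) monoid_scheme \<Rightarrow> (nat \<Rightarrow> int) \<Rightarrow> (nat \<Rightarrow> 'a) \<Rightarrow> nat \<Rightarrow> 'a" where
  "word_val G k x 0 = \<one>\<^bsub>G\<^esub>"
| "word_val G k x (Suc m) = word_val G k x m \<otimes>\<^bsub>G\<^esub> (x m [^]\<^bsub>G\<^esub> k m)"

end

theory Submission
  imports Defs
begin

lemma (in group) comm_int_pow: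
  assumes z: "z \<in> carrier G" and g: "g \<in> carrier G" and c: "z \<otimes> g = g \<otimes> z"
  shows "z [^] (j::int) \<otimes> g = g \<otimes> z [^] j"
proof -
  let ?H = "{w \<in> carrier G. w \<otimes> g = g \<otimes> w}"
  have "subgroup ?H G"
  proof (rule subgroupI)
    show "?H \<noteq> {}" using g by auto
    fix a assume a: "a \<in> ?H"
    then have ac: "a \<in> carrier G" and e: "a \<otimes> g = g \<otimes> a" by auto
    have "inv a \<otimes> g = inv a \<otimes> (g \<otimes> a) \<otimes> inv a"
      using ac g by (simp add: m_assoc)
    also have "\<dots> = inv a \<otimes> (a \<otimes> g) \<otimes> inv a" using e by simp
    also have "\<dots> = g \<otimes> inv a" using ac g by (simp flip: m_assoc)
    finally show "inv a \<in> ?H" using ac by simp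
  next
    fix a b assume "a \<in> ?H" "b \<in> ?H"
    then have a: "a \<in> carrier G" "a \<otimes> g = g \<otimes> a" and b: "b \<in> carrier G" "b \<otimes> g = g \<otimes> b"
      by auto
    have "a \<otimes> b \<otimes> g = a \<otimes> (b \<otimes> g)" by (rule m_assoc[OF a(1) b(1) g])
    also have "\<dots> = a \<otimes> (g \<otimes> b)" using b by simp
    also have "\<dots> = (a \<otimes> g) \<otimes> b" by (rule m_assoc[symmetric, OF a(1) g b(1)])
    also have "\<dots> = g \<otimes> a \<otimes> b" using a by simp
    also have "\<dots> = g \<otimes> (a \<otimes> b)" by (rule m_assoc[OF g a(1) b(1)])
    finally show "a \<otimes> b \<in> ?H" using a b by simp
  qed auto
  then have "z [^] j \<in> ?H" by (rule subgroup_int_pow_closed) (use z c in auto)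
  then show ?thesis by simp
qed

lemma (in group) word_closed:
  "\<forall>j<m. y j \<in> carrier G \<Longrightarrow> word_val G k y m \<in> carrier G"
  by (induction m) auto

lemma (in group) word_shift:
  assumes z: "z \<in> group_center G"
    and y: "\<forall>j<m. y j \<in> carrier G"
    and xo: "\<forall>j<m. j \<noteq> i \<longrightarrow> x j = y j"
    and xi: "i < m \<longrightarrow> x i = z \<otimes>\<^bsub>G\<^esub> y i"
  shows "word_val G k x m = word_val G k y m \<otimes>\<^bsub>G\<^esub> (if i < m then z [^]\<^bsub>G\<^esub> k i else \<one>\<^bsub>G\<^esub>)"
  using y xo xi
proof (induction m)
  case 0
  then show ?case by simp
next
  case (Suc m)
  have zc: "z \<in> carrier G" and zcomm: "\<And>g. g \<in> carrier G \<Longrightarrow> z \<otimes> g = g \<otimes> z"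
    using z by (auto simp: group_center_def)
  have ym: "y m \<in> carrier G" using Suc.prems(1) by simp
  have wy: "word_val G k y m \<in> carrier G"
    by (rule word_closed) (use Suc.prems(1) in simp)
  have IH: "word_val G k x m = word_val G k y m \<otimes> (if i < m then z [^] k i else \<one>)"
    apply (rule Suc.IH)
    using Suc.prems by simp_all
  have zk: "\<And>g. g \<in> carrier G \<Longrightarrow> z [^] k i \<otimes> g = g \<otimes> z [^] k i"
    using comm_int_pow zc zcomm by blast
  show ?case
  proof (cases "m = i")
    case True
    then have xm: "x m = z \<otimes> y m" using Suc.prems(3) by simp
    have "word_val G k x (Suc m) = word_val G k x m \<otimes> x m [^] k m" by simp
    also have "\<dots> = word_val G k y m \<otimes> (z \<otimes> y m) [^] k m"
      using IH True xm wy by simp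
    also have "\<dots> = word_val G k y m \<otimes> (z [^] k m \<otimes> y m [^] k m)"
      using int_pow_mult_distrib[OF zcomm[OF ym] zc ym] by simp
    also have "\<dots> = word_val G k y m \<otimes> (y m [^] k m \<otimes> z [^] k m)"
      using zk[of "y m [^] k m"] ym True by simp
    also have "\<dots> = word_val G k y m \<otimes> y m [^] k m \<otimes> z [^] k m"
      using ym zc wy by (simp add: m_assoc)
    finally show ?thesis using True by simp
  next
    case False
    then have xm: "x m = y m" using Suc.prems(2) by simp
    show ?thesis
    proof (cases "i < m")
      case True
      have "word_val G k x (Suc m) = word_val G k x m \<otimes> x m [^] k m" by simp
      also have "\<dots> = word_val G k y m \<otimes> z [^] k i \<otimes> y m [^] k m"
        using IH True xm by simp
      also have "\<dots> = word_val G k y m \<otimes> (z [^] k i \<otimes> y m [^] k m)"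
        using ym zc wy by (simp add: m_assoc)
      also have "\<dots> = word_val G k y m \<otimes> (y m [^] k m \<otimes> z [^] k i)"
        using zk[of "y m [^] k m"] ym by simp
      also have "\<dots> = word_val G k y m \<otimes> y m [^] k m \<otimes> z [^] k i"
        using ym zc wy by (simp add: m_assoc)
      finally show ?thesis using True by simp
    next
      case f2: False
      then show ?thesis using IH xm False ym wy by simp
    qed
  qed
qed

lemma (in group) main_aux:
  assumes "c \<in> carrier G"
    and "two_large (power_group G n)
           {x \<in> carrier (power_group G n). word_val G k x n = c}"
  shows "\<forall>z \<in> group_center G. z [^]\<^bsub>G\<^esub> (Gcd (k ` {..<n})) = \<one>\<^bsub>G\<^esub>"
proof
  fix z assume z: "z \<in> group_center G"
  then have zc: "z \<in> carrier G" by (simp add: group_center_def)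
  define P where "P = power_group G n"
  define SS where "SS = {x \<in> carrier P. word_val G k x n = c}"
  have TL: "two_large P SS" using assms(2) unfolding P_def SS_def .
  have key: "z [^]\<^bsub>G\<^esub> k i = \<one>\<^bsub>G\<^esub>" if i: "i < n" for i
  proof -
    define a where "a = (\<lambda>j\<in>{..<n}. (\<one>\<^bsub>G\<^esub>::'a))"
    define b where "b = (\<lambda>j\<in>{..<n}. if j = i then z else \<one>\<^bsub>G\<^esub>)"
    have aP: "a \<in> carrier P" unfolding a_def P_def power_group_def by auto
    have bP: "b \<in> carrier P" unfolding b_def P_def power_group_def using zc by auto
    from TL aP bP have "l_coset P a SS \<inter> l_coset P b SS \<noteq> {}"
      unfolding two_large_def by blast
    then obtain x y where x: "x \<in> SS" and y: "y \<in> SS" and e: "a \<otimes>\<^bsub>P\<^esub> x = b \<otimes>\<^bsub>P\<^esub> y"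
      unfolding l_coset_def by blast
    have xP: "x \<in> (\<Pi>\<^sub>E j\<in>{..<n}. carrier G)" and yP: "y \<in> (\<Pi>\<^sub>E j\<in>{..<n}. carrier G)"
      using x y unfolding SS_def P_def power_group_def by auto
    have ax: "a \<otimes>\<^bsub>P\<^esub> x = x"
    proof
      fix j show "(a \<otimes>\<^bsub>P\<^esub> x) j = x j"
        using xP unfolding a_def P_def power_group_def
        by (cases "j < n") (auto simp: PiE_def extensional_def Pi_def)
    qed
    have xj: "x j = (if j = i then z else \<one>\<^bsub>G\<^esub>) \<otimes>\<^bsub>G\<^esub> y j" if "j < n" for j
    proof -
      have "x j = (b \<otimes>\<^bsub>P\<^esub> y) j" using e ax by simp
      then show ?thesis using that unfolding b_def P_def power_group_def by simp
    qed
    have ws: "word_val G k x n = word_val G k y n \<otimes>\<^bsub>G\<^esub> z [^]\<^bsub>G\<^esub> k i"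
      using word_shift[OF z, of n y i x k] xj yP i by (auto simp: PiE_def Pi_def)
    have "word_val G k x n = c" "word_val G k y n = c" using x y unfolding SS_def by auto
    then have "c \<otimes>\<^bsub>G\<^esub> z [^]\<^bsub>G\<^esub> k i = c \<otimes>\<^bsub>G\<^esub> \<one>\<^bsub>G\<^esub>" using ws assms(1) by simp
    then show ?thesis using assms(1) zc by (meson l_cancel int_pow_closed one_closed)
  qed
  have "int (ord z) dvd Gcd (k ` {..<n})"
    by (rule Gcd_greatest) (use key int_pow_eq_id[OF zc] in auto)
  then show "z [^]\<^bsub>G\<^esub> (Gcd (k ` {..<n})) = \<one>\<^bsub>G\<^esub>" using int_pow_eq_id[OF zc] by simp
qed

theorem corollary3p10:
  fixes G :: "('a, 'b) monoid_scheme" and c :: 'a and k :: "nat \<Rightarrow> int" and n :: nat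
  assumes "group G"
    and "c \<in> carrier G"
    and "two_large (power_group G n)
           {x \<in> carrier (power_group G n). word_val G k x n = c}"
  shows "\<forall>z \<in> group_center G. z [^]\<^bsub>G\<^esub> (Gcd (k ` {..<n})) = \<one>\<^bsub>G\<^esub>"
  using group.main_aux[OF assms] .

end
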